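(* Let $\mathcal M\in\{\mathbb R,\mathbb T\}$, $1\le p,q\le\infty$, $s\in\mathbb R$. For $N\ge2$ and $R>0$ let $\phi_{0,N}$ be defined by $\mathcal F\phi_{0,N}(\xi)=R\chi_{I_N}(\xi)$ ($\xi\in\widehat{\mathcal M}$), $I_N=[-N-1,-N+1]\cup[N-1,N+1]$. Then there exist $T_0>0$, $N_0\ge2$ and $c>0$ such that for all $N\ge N_0$, $R>0$ and $0<T\le T_0$, $$\|U_2[\phi_{0,N}](T)\|_{\widehat w^{p,q}_s}\ \ge\ \big\|\,\|\chi_{n+Q_1}(\xi)\mathcal FU_2[\phi_{0,N}](T)(\xi)\|_{L^p_\xi(\widehat{\mathcal M})}\langle n\rangle^s\big\|_{\ell^q(n=1)}\ \ge\ c\,R^2T,$$ where $\|a_n\|_{\ell^q(n=1)}=|a_1|$.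
   Context: $\widehat{\mathcal M}$ is the dual group ($\mathbb R$, or $\mathbb Z$ for $\mathcal M=\mathbb T$); $\mathcal F$ the Fourier transform; $\langle n\rangle=(1+|n|^2)^{1/2}$; $Q_1=(-\tfrac12,\tfrac12]$; $\|f\|_{\widehat w^{p,q}_s}=\big\|\,\|\chi_{n+Q_1}\mathcal Ff\|_{L^p(\widehat{\mathcal M})}\langle n\rangle^s\big\|_{\ell^q_n(\mathbb Z)}$. With $\varphi(\xi)=\xi/(1+\xi^2)$, $U(t)=\mathcal F^{-1}e^{it\varphi(\xi)}\mathcal F$ and $\mathcal N(u,v)(t)=\int_0^tU(t-\tau)\varphi(D_x)(uv)(\tau)\,d\tau$, the second Picard iterate is $U_2[u_0](t)=-\frac i2\mathcal N(U(\cdot)u_0,U(\cdot)u_0)(t)$. *)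

theory Defs
  imports "HOL-Analysis.Analysis" "HOL-Probability.Essential_Supremum"
begin

datatype manifold = Line | Torus

text \<open>Haar measure on the dual group, realised on real frequencies:
  Lebesgue measure for R, counting measure on the integers for T.\<close>
definition dual_measure :: "manifold \<Rightarrow> real measure" where
  "dual_measure M = (case M of Line \<Rightarrow> lborel | Torus \<Rightarrow> count_space \<int>)"

text \<open>Fourier convention: F f(xi) = integral e^(-i x xi) f(x) dx on R,
  Fourier coefficients (1/(2 pi)) integral_0^(2 pi) e^(-i n x) f(x) dx on T.
  Then F(u v) = kappa * (F u * F v) (convolution over the dual group).\<close>
definition conv_const :: "manifold \<Rightarrow> complex" where
  "conv_const M = (case M of Line \<Rightarrow> 1 / (2 * complex_of_real pi) | Torus \<Rightarrow> 1)"

definition dual_conv :: "manifold \<Rightarrow> (real \<Rightarrow> complex) \<Rightarrow> (real \<Rightarrow> complex) \<Rightarrow> real \<Rightarrow> complex" where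
  "dual_conv M f g \<xi> = conv_const M * (\<integral>\<eta>. f (\<xi> - \<eta>) * g \<eta> \<partial>dual_measure M)"

definition symb :: "real \<Rightarrow> real" where
  "symb \<xi> = \<xi> / (1 + \<xi>\<^sup>2)"

definition U_hat :: "real \<Rightarrow> (real \<Rightarrow> complex) \<Rightarrow> real \<Rightarrow> complex" where
  "U_hat t u0h \<xi> = exp (\<i> * complex_of_real (t * symb \<xi>)) * u0h \<xi>"

text \<open>Fourier transform of N(u,v)(t) = int_0^t U(t-tau) phi(D)(u v)(tau) dtau,
  where u, v are given through their Fourier transforms uh tau, vh tau.\<close>
definition N_hat :: "manifold \<Rightarrow> (real \<Rightarrow> real \<Rightarrow> complex) \<Rightarrow> (real \<Rightarrow> real \<Rightarrow> complex)
    \<Rightarrow> real \<Rightarrow> real \<Rightarrow> complex" where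
  "N_hat M uh vh t \<xi> =
     (LBINT \<tau>=0..t. exp (\<i> * complex_of_real ((t - \<tau>) * symb \<xi>)) * complex_of_real (symb \<xi>)
                      * dual_conv M (uh \<tau>) (vh \<tau>) \<xi>)"

text \<open>Fourier transform of the second Picard iterate U_2[u0](t) = -(i/2) N(U u0, U u0)(t).\<close>
definition U2_hat :: "manifold \<Rightarrow> (real \<Rightarrow> complex) \<Rightarrow> real \<Rightarrow> real \<Rightarrow> complex" where
  "U2_hat M u0h t \<xi> = - (\<i> / 2) * N_hat M (\<lambda>\<tau>. U_hat \<tau> u0h) (\<lambda>\<tau>. U_hat \<tau> u0h) t \<xi>"

definition ennpow :: "ennreal \<Rightarrow> real \<Rightarrow> ennreal" where
  "ennpow x r = (if x = \<infinity> then \<infinity> else ennreal (enn2real x powr r))"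

definition Lp_norm :: "'a measure \<Rightarrow> ennreal \<Rightarrow> ('a \<Rightarrow> ennreal) \<Rightarrow> ennreal" where
  "Lp_norm \<mu> p f = (if p = \<infinity> then esssup \<mu> f
       else ennpow (\<integral>\<^sup>+x. ennpow (f x) (enn2real p) \<partial>\<mu>) (1 / enn2real p))"

definition jbr :: "int \<Rightarrow> real" where
  "jbr n = sqrt (1 + (real_of_int n)\<^sup>2)"

definition Q1 :: "real set" where
  "Q1 = {-1/2<..1/2}"

definition wpiece :: "manifold \<Rightarrow> ennreal \<Rightarrow> real \<Rightarrow> (real \<Rightarrow> complex) \<Rightarrow> int \<Rightarrow> ennreal" where
  "wpiece M p s fh n =
     Lp_norm (dual_measure M) p (\<lambda>\<xi>. ennreal (indicator ((\<lambda>x. real_of_int n + x) ` Q1) \<xi> * cmod (fh \<xi>)))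
     * ennreal (jbr n powr s)"

definition wnorm :: "manifold \<Rightarrow> ennreal \<Rightarrow> ennreal \<Rightarrow> real \<Rightarrow> (real \<Rightarrow> complex) \<Rightarrow> ennreal" where
  "wnorm M p q s fh = Lp_norm (count_space (UNIV :: int set)) q (wpiece M p s fh)"

definition I_N :: "real \<Rightarrow> real set" where
  "I_N N = {-N-1..-N+1} \<union> {N-1..N+1}"

definition phi0_hat :: "real \<Rightarrow> real \<Rightarrow> real \<Rightarrow> complex" where
  "phi0_hat R N \<xi> = complex_of_real (R * indicator (I_N N) \<xi>)"

end

theory Submission
  imports Defs
begin


lemma exp_i_bound: "cmod (exp (\<i> * complex_of_real x) - 1) \<le> \<bar>x\<bar>"
proof -
  have e: "exp (\<i> * complex_of_real x) = cis x"
    by (simp add: cis_conv_exp)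
  have n: "cmod (exp (\<i> * complex_of_real x) - 1) = sqrt ((cos x - 1)\<^sup>2 + (sin x)\<^sup>2)"
    unfolding e cmod_def by simp
  have "(cos x - 1)\<^sup>2 + (sin x)\<^sup>2 = ((sin x)\<^sup>2 + (cos x)\<^sup>2) + 1 - 2 * cos x"
    by (simp add: power2_diff)
  also have "\<dots> = 2 - 2 * cos x" using sin_cos_squared_add[of x] by simp
  also have "\<dots> = 4 * (sin (x/2))\<^sup>2" using cos_double_sin[of "x/2"] by simp
  also have "\<dots> \<le> 4 * (x/2)\<^sup>2"
  proof -
    have "\<bar>sin (x/2)\<bar>\<^sup>2 \<le> \<bar>x/2\<bar>\<^sup>2" by (intro power_mono abs_sin_x_le_abs_x) simp
    then show ?thesis by (simp add: power_divide)
  qed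
  also have "\<dots> = x\<^sup>2" by (simp add: power2_eq_square)
  finally have "sqrt ((cos x - 1)\<^sup>2 + (sin x)\<^sup>2) \<le> sqrt (x\<^sup>2)" by (rule real_sqrt_le_mono)
  then show ?thesis unfolding n by simp
qed

lemma ennpow_mono: "x \<le> y \<Longrightarrow> 0 \<le> r \<Longrightarrow> ennpow x r \<le> ennpow y r"
  unfolding ennpow_def
  by (auto intro!: ennreal_leI powr_mono2 enn2real_mono simp: top_unique less_top)

lemma ennpow_inv: "0 < r \<Longrightarrow> ennpow (ennpow C r) (1/r) = C"
  by (cases "C = \<infinity>") (auto simp: ennpow_def powr_powr less_top)

lemma Lp_lower:
  assumes p: "1 \<le> p" and S: "S \<in> sets \<mu>" and mS: "emeasure \<mu> S \<ge> 1" and f: "\<And>x. x \<in> S \<Longrightarrow> C \<le> f x"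
  shows "C \<le> Lp_norm \<mu> p f"
proof (cases "p = \<infinity>")
  case True
  show ?thesis
  proof (cases "f \<in> borel_measurable \<mu>")
    case False then show ?thesis using True by (simp add: Lp_norm_def esssup_non_measurable)
  next
    case meas: True
    show ?thesis
    proof (rule ccontr)
      assume "\<not> C \<le> Lp_norm \<mu> p f"
      then have lt: "esssup \<mu> f < C" using True by (simp add: Lp_norm_def not_le)
      have "AE x in \<mu>. x \<notin> S"
        using esssup_AE[where M=\<mu> and f=f]
      proof (rule AE_mp, intro AE_I2 impI)
        fix x assume fx: "f x \<le> esssup \<mu> f"
        show "x \<notin> S"
        proof
          assume "x \<in> S"
          then have "C \<le> f x" by (rule f)
          with fx lt show False by (meson leD order.trans)
        qed
      qed
      then have "emeasure \<mu> S = 0"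
        using S by (subst (asm) AE_iff_measurable[OF S]) (auto dest: sets.sets_into_space)
      with mS show False by simp
    qed
  qed
next
  case False
  define r where "r = enn2real p"
  have "enn2real 1 \<le> enn2real p" using p False by (intro enn2real_mono) (auto simp: less_top)
  then have r1: "1 \<le> r" unfolding r_def by simp
  have "(\<integral>\<^sup>+x. ennpow C r * indicator S x \<partial>\<mu>) \<le> (\<integral>\<^sup>+x. ennpow (f x) r \<partial>\<mu>)"
    using r1 by (intro nn_integral_mono) (auto simp: indicator_def intro!: ennpow_mono f)
  moreover have "(\<integral>\<^sup>+x. ennpow C r * indicator S x \<partial>\<mu>) = ennpow C r * emeasure \<mu> S"
    using S by (simp add: nn_integral_cmult_indicator)
  moreover have "ennpow C r \<le> ennpow C r * emeasure \<mu> S"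
    using mS by (metis mult.right_neutral mult_left_mono zero_le)
  ultimately have "ennpow C r \<le> (\<integral>\<^sup>+x. ennpow (f x) r \<partial>\<mu>)" by simp
  then have "ennpow (ennpow C r) (1/r) \<le> ennpow (\<integral>\<^sup>+x. ennpow (f x) r \<partial>\<mu>) (1/r)"
    using r1 by (intro ennpow_mono) auto
  then show ?thesis using r1 False by (simp add: ennpow_inv Lp_norm_def r_def)
qed


lemma norm_exp_ii: "cmod (exp (\<i> * complex_of_real r)) = 1"
  by (simp add: cis_conv_exp[symmetric])

lemma exp_diff_bound:
  "cmod (exp (\<i> * complex_of_real a) - exp (\<i> * complex_of_real b)) \<le> \<bar>a - b\<bar>"
proof -
  have "exp (\<i> * complex_of_real a) = exp (\<i> * complex_of_real b) * exp (\<i> * complex_of_real (a - b))"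
    by (simp add: exp_add[symmetric] algebra_simps)
  then have "exp (\<i> * complex_of_real a) - exp (\<i> * complex_of_real b)
      = exp (\<i> * complex_of_real b) * (exp (\<i> * complex_of_real (a - b)) - 1)"
    by (simp add: algebra_simps)
  then show ?thesis using exp_i_bound[of "a - b"] by (simp add: norm_mult norm_exp_ii)
qed

lemma conv_est:
  fixes \<mu> :: "real measure" and \<kappa> :: complex and w \<psi> :: "real \<Rightarrow> real"
  assumes w_int: "integrable \<mu> w" and w0: "\<And>\<eta>. 0 \<le> w \<eta>" and psi: "\<And>\<eta>. \<bar>\<psi> \<eta>\<bar> \<le> 1"
    and psim: "\<psi> \<in> borel_measurable \<mu>"
  defines "cv \<equiv> \<lambda>\<tau>. \<kappa> * (\<integral>\<eta>. exp (\<i> * complex_of_real (\<tau> * \<psi> \<eta>)) * complex_of_real (w \<eta>) \<partial>\<mu>)"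
    and "A \<equiv> \<integral>\<eta>. w \<eta> \<partial>\<mu>"
  shows "cmod (cv \<tau> - cv \<tau>') \<le> cmod \<kappa> * A * \<bar>\<tau> - \<tau>'\<bar>" and "cv 0 = \<kappa> * complex_of_real A"
    and "cmod (cv \<tau>) \<le> cmod \<kappa> * A"
proof -
  define g where "g = (\<lambda>\<tau> \<eta>. exp (\<i> * complex_of_real (\<tau> * \<psi> \<eta>)) * complex_of_real (w \<eta>))"
  have wm: "w \<in> borel_measurable \<mu>" using w_int by (rule borel_measurable_integrable)
  have gint: "integrable \<mu> (g t)" for t
    unfolding g_def
  proof (rule Bochner_Integration.integrable_bound[OF w_int])
    show "(\<lambda>\<eta>. exp (\<i> * complex_of_real (t * \<psi> \<eta>)) * complex_of_real (w \<eta>)) \<in> borel_measurable \<mu>"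
      using wm psim by measurable
    show "AE x in \<mu>. norm (exp (\<i> * complex_of_real (t * \<psi> x)) * complex_of_real (w x)) \<le> norm (w x)"
      by (simp add: norm_mult norm_exp_ii)
  qed
  have cvg: "cv t = \<kappa> * integral\<^sup>L \<mu> (g t)" for t unfolding cv_def g_def by simp
  have "cv \<tau> - cv \<tau>' = \<kappa> * (\<integral>\<eta>. g \<tau> \<eta> - g \<tau>' \<eta> \<partial>\<mu>)"
    using gint by (simp add: cvg algebra_simps)
  also have "cmod \<dots> \<le> cmod \<kappa> * (\<integral>\<eta>. norm (g \<tau> \<eta> - g \<tau>' \<eta>) \<partial>\<mu>)"
    by (simp add: norm_mult mult_left_mono integral_norm_bound)
  also have "\<dots> \<le> cmod \<kappa> * (\<integral>\<eta>. \<bar>\<tau> - \<tau>'\<bar> * w \<eta> \<partial>\<mu>)"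
  proof (intro mult_left_mono integral_mono)
    show "integrable \<mu> (\<lambda>\<eta>. norm (g \<tau> \<eta> - g \<tau>' \<eta>))" using gint by auto
    show "integrable \<mu> (\<lambda>\<eta>. \<bar>\<tau> - \<tau>'\<bar> * w \<eta>)" using w_int by auto
    fix \<eta>
    have "norm (g \<tau> \<eta> - g \<tau>' \<eta>) = cmod (exp (\<i> * complex_of_real (\<tau> * \<psi> \<eta>)) - exp (\<i> * complex_of_real (\<tau>' * \<psi> \<eta>))) * w \<eta>"
      using w0[of \<eta>] by (simp add: g_def left_diff_distrib[symmetric] norm_mult del: of_real_mult)
    also have "\<dots> \<le> \<bar>\<tau> * \<psi> \<eta> - \<tau>' * \<psi> \<eta>\<bar> * w \<eta>"
      using w0[of \<eta>] by (intro mult_right_mono exp_diff_bound) auto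
    also have "\<bar>\<tau> * \<psi> \<eta> - \<tau>' * \<psi> \<eta>\<bar> = \<bar>\<tau> - \<tau>'\<bar> * \<bar>\<psi> \<eta>\<bar>"
      by (simp add: left_diff_distrib[symmetric] abs_mult)
    also have "\<bar>\<tau> - \<tau>'\<bar> * \<bar>\<psi> \<eta>\<bar> * w \<eta> \<le> \<bar>\<tau> - \<tau>'\<bar> * w \<eta>"
      using w0[of \<eta>] psi[of \<eta>] by (simp add: mult.assoc mult_left_mono mult_left_le_one_le)
    finally show "norm (g \<tau> \<eta> - g \<tau>' \<eta>) \<le> \<bar>\<tau> - \<tau>'\<bar> * w \<eta>" .
  qed auto
  also have "\<dots> = cmod \<kappa> * A * \<bar>\<tau> - \<tau>'\<bar>" by (simp add: A_def)
  finally show "cmod (cv \<tau> - cv \<tau>') \<le> cmod \<kappa> * A * \<bar>\<tau> - \<tau>'\<bar>" .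
  show "cv 0 = \<kappa> * complex_of_real A" unfolding cv_def A_def by simp
  have "cmod (cv \<tau>) \<le> cmod \<kappa> * (\<integral>\<eta>. norm (g \<tau> \<eta>) \<partial>\<mu>)"
    by (simp add: cvg norm_mult mult_left_mono integral_norm_bound)
  also have "(\<integral>\<eta>. norm (g \<tau> \<eta>) \<partial>\<mu>) = A"
    unfolding A_def g_def using w0 by (simp add: norm_mult norm_exp_ii)
  finally show "cmod (cv \<tau>) \<le> cmod \<kappa> * A" .
qed


lemma tau_est:
  fixes cv :: "real \<Rightarrow> complex" and a K0 T :: real and c0 :: complex
  assumes cont: "continuous_on UNIV cv" and b1: "\<And>\<tau>. cmod (cv \<tau> - c0) \<le> K0 * \<bar>\<tau>\<bar>"
    and b2: "\<And>\<tau>. cmod (cv \<tau>) \<le> K0" and c0: "cmod c0 = K0" and a: "\<bar>a\<bar> \<le> 1/2"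
    and T: "0 < T" "T \<le> 1/3"
  shows "\<bar>a\<bar> * K0 * T / 2 \<le> cmod (LBINT \<tau>=0..T. exp (\<i> * complex_of_real ((T - \<tau>) * a)) * complex_of_real a * cv \<tau>)"
proof -
  define h where "h = (\<lambda>\<tau>. exp (\<i> * complex_of_real ((T - \<tau>) * a)) * complex_of_real a * cv \<tau>)"
  have K0: "0 \<le> K0" using c0 by auto
  have hc: "continuous_on {0..T} h" unfolding h_def
    by (intro continuous_intros continuous_on_subset[OF cont]) auto
  have "(LBINT \<tau>=0..T. h \<tau>) = (LBINT \<tau>=ereal 0..ereal T. h \<tau>)" by (simp add: zero_ereal_def)
  also have "\<dots> = (LBINT \<tau>:{0..T}. h \<tau>)" using T by (intro interval_integral_Icc) auto
  also have "\<dots> = integral {0..T} h"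
    by (rule set_borel_integral_eq_integral(2)[OF borel_integrable_atLeastAtMost'[OF hc]])
  finally have LI: "(LBINT \<tau>=0..T. h \<tau>) = integral {0..T} h" .
  have hi: "h integrable_on {0..T}" using hc by (rule integrable_continuous_interval)
  have "integral {0..T} (\<lambda>\<tau>. h \<tau> - complex_of_real a * c0) = integral {0..T} h - complex_of_real T * (complex_of_real a * c0)"
    using T by (subst integral_diff[OF hi integrable_const_ivl]) (simp add: scaleR_conv_of_real)
  moreover have "norm (integral {0..T} (\<lambda>\<tau>. h \<tau> - complex_of_real a * c0)) \<le> (3/2 * \<bar>a\<bar> * K0 * T) * (T - 0)"
  proof (rule integral_bound)
    show "continuous_on {0..T} (\<lambda>\<tau>. h \<tau> - complex_of_real a * c0)" using hc by (intro continuous_intros)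
    fix \<tau> assume t: "\<tau> \<in> {0..T}"
    have eq: "h \<tau> - complex_of_real a * c0 = complex_of_real a * ((exp (\<i> * complex_of_real ((T - \<tau>) * a)) - 1) * cv \<tau> + (cv \<tau> - c0))"
      by (simp add: h_def algebra_simps)
    have "cmod ((exp (\<i> * complex_of_real ((T - \<tau>) * a)) - 1) * cv \<tau>) \<le> \<bar>(T - \<tau>) * a\<bar> * K0"
      unfolding norm_mult by (intro mult_mono exp_i_bound b2) auto
    also have "\<dots> \<le> T/2 * K0"
    proof (rule mult_right_mono[OF _ K0])
      have "\<bar>(T - \<tau>) * a\<bar> = (T - \<tau>) * \<bar>a\<bar>" using t by (simp add: abs_mult)
      also have "\<dots> \<le> T * (1/2)" using t a T by (intro mult_mono) auto
      finally show "\<bar>(T - \<tau>) * a\<bar> \<le> T/2" by simp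
    qed
    finally have e1: "cmod ((exp (\<i> * complex_of_real ((T - \<tau>) * a)) - 1) * cv \<tau>) \<le> T/2 * K0" .
    have e2: "cmod (cv \<tau> - c0) \<le> K0 * T" using b1[of \<tau>] t K0
      by (smt (verit, best) atLeastAtMost_iff mult_left_mono)
    have "norm (h \<tau> - complex_of_real a * c0) \<le> \<bar>a\<bar> * (T/2 * K0 + K0 * T)"
      unfolding eq norm_mult norm_of_real
      by (intro mult_left_mono order.trans[OF norm_triangle_ineq] add_mono e1 e2) auto
    also have "\<dots> = 3/2 * \<bar>a\<bar> * K0 * T" by (simp add: algebra_simps)
    finally show "norm (h \<tau> - complex_of_real a * c0) \<le> 3/2 * \<bar>a\<bar> * K0 * T" .
  qed (use T in auto)
  ultimately have d: "cmod (integral {0..T} h - complex_of_real T * (complex_of_real a * c0)) \<le> 3/2 * \<bar>a\<bar> * K0 * T * T"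
    by simp
  have m: "cmod (complex_of_real T * (complex_of_real a * c0)) = T * \<bar>a\<bar> * K0"
    using T c0 by (simp add: norm_mult)
  have "T * \<bar>a\<bar> * K0 - 3/2 * \<bar>a\<bar> * K0 * T * T \<le> cmod (integral {0..T} h)"
    using d m norm_triangle_ineq2[of "complex_of_real T * (complex_of_real a * c0)" "integral {0..T} h"]
    by (simp add: norm_minus_commute)
  moreover have "\<bar>a\<bar> * K0 * T / 2 \<le> T * \<bar>a\<bar> * K0 - 3/2 * \<bar>a\<bar> * K0 * T * T"
  proof -
    have "0 \<le> \<bar>a\<bar> * K0 * T" using K0 T by auto
    then have "\<bar>a\<bar> * K0 * T * (3/2 * T) \<le> \<bar>a\<bar> * K0 * T * (1/2)" using T by (intro mult_left_mono) auto
    then show ?thesis by (simp add: algebra_simps)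
  qed
  ultimately have "\<bar>a\<bar> * K0 * T / 2 \<le> cmod (LBINT \<tau>=0..T. h \<tau>)" unfolding LI by linarith
  then show ?thesis by (simp only: h_def)
qed


lemma symb_meas[measurable]: "symb \<in> borel_measurable borel"
  unfolding symb_def by measurable

lemma symb_le: "\<bar>symb x\<bar> \<le> 1/2"
proof -
  have "0 \<le> (\<bar>x\<bar> - 1)\<^sup>2" by (rule zero_le_power2)
  also have "\<dots> = x\<^sup>2 + 1 - 2 * \<bar>x\<bar>" by (simp only: power2_diff power2_abs) simp
  finally have "2 * \<bar>x\<bar> \<le> 1 + x\<^sup>2" by linarith
  moreover have d: "0 < 1 + x\<^sup>2" by (intro add_pos_nonneg) auto
  moreover have "\<bar>symb x\<bar> = \<bar>x\<bar> / (1 + x\<^sup>2)" unfolding symb_def abs_divide abs_of_pos[OF d] ..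
  ultimately show ?thesis by (subst \<open>\<bar>symb x\<bar> = _\<close>, subst pos_divide_le_eq[OF d]) (simp only: distrib_left mult_1_right; linarith)
qed

lemma dual_meas: "f \<in> borel_measurable borel \<Longrightarrow> f \<in> borel_measurable (dual_measure M)"
  by (cases M) (auto simp: dual_measure_def)

lemma conv_const_ge: "1/8 \<le> cmod (conv_const M)"
proof (cases M)
  case Line
  have "cmod (conv_const M) = 1 / (2 * pi)" using Line pi_gt_zero
    by (simp add: conv_const_def norm_divide)
  also have "1/8 \<le> 1 / (2 * pi)" using pi_less_4 pi_gt_zero by (simp add: field_simps)
  finally show ?thesis by simp
qed (simp add: conv_const_def)

lemma U2_repr:
  "U2_hat M (phi0_hat R N) T \<xi> = - (\<i> / 2) * (LBINT \<tau>=0..T. exp (\<i> * complex_of_real ((T - \<tau>) * symb \<xi>)) * complex_of_real (symb \<xi>)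
     * (conv_const M * (\<integral>\<eta>. exp (\<i> * complex_of_real (\<tau> * (symb (\<xi> - \<eta>) + symb \<eta>)))
         * complex_of_real ((R * indicator (I_N N) (\<xi> - \<eta>)) * (R * indicator (I_N N) \<eta>)) \<partial>dual_measure M)))"
proof -
  have eq: "(U_hat \<tau> (phi0_hat R N) (\<xi> - \<eta>)) * (U_hat \<tau> (phi0_hat R N) \<eta>) =
     exp (\<i> * complex_of_real (\<tau> * (symb (\<xi> - \<eta>) + symb \<eta>)))
         * complex_of_real ((R * indicator (I_N N) (\<xi> - \<eta>)) * (R * indicator (I_N N) \<eta>))" for \<tau> \<eta>
  proof -
    have e: "exp (\<i> * complex_of_real (\<tau> * (a + b))) = exp (\<i> * complex_of_real (\<tau> * a)) * exp (\<i> * complex_of_real (\<tau> * b))" for a b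
      by (simp add: exp_add[symmetric] ring_distribs)
    show ?thesis unfolding U_hat_def phi0_hat_def e by (simp only: of_real_mult mult_ac)
  qed
  show ?thesis
    unfolding U2_hat_def N_hat_def dual_conv_def by (simp only: eq)
qed



lemma w_lower:
  fixes \<mu> :: "real measure" and R N \<xi> :: real
  assumes N: "0 \<le> N"
    and E: "E \<in> sets \<mu>" "emeasure \<mu> E < \<infinity>" "1/2 \<le> measure \<mu> E"
    and Ein: "\<And>\<eta>. \<eta> \<in> E \<Longrightarrow> \<eta> \<in> I_N N \<and> \<xi> - \<eta> \<in> I_N N"
    and B: "integrable \<mu> (indicator {-N-1..N+1} :: real \<Rightarrow> real)"
    and wm: "(\<lambda>\<eta>. (R * indicator (I_N N) (\<xi> - \<eta>)) * (R * indicator (I_N N) \<eta>)) \<in> borel_measurable \<mu>"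
  shows "integrable \<mu> (\<lambda>\<eta>. (R * indicator (I_N N) (\<xi> - \<eta>)) * (R * indicator (I_N N) \<eta>) :: real)"
    and "R\<^sup>2/2 \<le> (\<integral>\<eta>. (R * indicator (I_N N) (\<xi> - \<eta>)) * (R * indicator (I_N N) \<eta>) \<partial>\<mu>)"
proof -
  let ?w = "\<lambda>\<eta>. (R * indicator (I_N N) (\<xi> - \<eta>)) * (R * indicator (I_N N) \<eta>) :: real"
  have wsq: "?w \<eta> = R\<^sup>2 * (indicator (I_N N) (\<xi> - \<eta>) * indicator (I_N N) \<eta>)" for \<eta>
    by (simp add: power2_eq_square mult_ac)
  have sub: "I_N N \<subseteq> {-N-1..N+1}" using N unfolding I_N_def by auto
  show wi: "integrable \<mu> ?w"
  proof (rule Bochner_Integration.integrable_bound[OF integrable_mult_right[OF B, of "R\<^sup>2"] wm])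
    show "AE x in \<mu>. norm (?w x) \<le> norm (R\<^sup>2 * indicator {-N-1..N+1} x)"
    proof (intro AE_I2)
      fix x
      have "indicator (I_N N) x \<le> (indicator {-N-1..N+1} x :: real)"
        using sub by (auto simp: indicator_def)
      then show "norm (?w x) \<le> norm (R\<^sup>2 * indicator {-N-1..N+1} x)"
        unfolding wsq by (auto simp: indicator_def abs_mult)
    qed
  qed
  have "(\<integral>\<eta>. R\<^sup>2 * indicator E \<eta> \<partial>\<mu>) \<le> integral\<^sup>L \<mu> ?w"
  proof (rule integral_mono[OF _ wi])
    show "integrable \<mu> (\<lambda>\<eta>. R\<^sup>2 * indicator E \<eta>)" using E by auto
    fix \<eta> show "R\<^sup>2 * indicator E \<eta> \<le> ?w \<eta>"
      unfolding wsq using Ein[of \<eta>] by (auto simp: indicator_def)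
  qed
  moreover have "(\<integral>\<eta>. R\<^sup>2 * indicator E \<eta> \<partial>\<mu>) = R\<^sup>2 * measure \<mu> E"
    using E sets.sets_into_space[OF E(1)] by (simp add: Int_absorb2)
  moreover have "R\<^sup>2 / 2 \<le> R\<^sup>2 * measure \<mu> E" using E(3)
    by (metis mult.commute divide_inverse inverse_eq_divide mult_left_mono zero_le_power2 times_divide_eq_right mult_1)
  ultimately show "R\<^sup>2/2 \<le> integral\<^sup>L \<mu> ?w" by linarith
qed

lemma finite_Ints_Icc: "finite ({a..b} \<inter> \<int> :: real set)"
proof (rule finite_subset[of _ "of_int ` {\<lfloor>a\<rfloor>..\<lceil>b\<rceil>}"])
  show "{a..b} \<inter> \<int> \<subseteq> of_int ` {\<lfloor>a\<rfloor>..\<lceil>b\<rceil>}"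
  proof
    fix x assume x: "x \<in> {a..b} \<inter> \<int>"
    then obtain k where k: "x = of_int k" by (auto elim: Ints_cases)
    have "\<lfloor>a\<rfloor> \<le> k" using x k by (simp add: floor_le_iff)
    moreover have "k \<le> \<lceil>b\<rceil>" using x k by (simp add: le_ceiling_iff)
    ultimately show "x \<in> of_int ` {\<lfloor>a\<rfloor>..\<lceil>b\<rceil>}" using k by auto
  qed
qed auto

lemma int_indicator_Icc: "integrable (dual_measure M) (indicator {a..b} :: real \<Rightarrow> real)"
proof (cases M)
  case Line then show ?thesis by (auto simp: dual_measure_def emeasure_lborel_Icc_eq intro!: integrable_real_indicator)
next
  case Torus
  have "integrable (count_space \<int>) (indicator ({a..b} \<inter> \<int>) :: real \<Rightarrow> real)"
    using finite_Ints_Icc[of a b] by (intro integrable_real_indicator) (auto simp: less_top[symmetric])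
  moreover have "integrable (count_space \<int>) (indicator ({a..b} \<inter> \<int>) :: real \<Rightarrow> real) \<longleftrightarrow>
      integrable (count_space \<int>) (indicator {a..b} :: real \<Rightarrow> real)"
    by (rule Bochner_Integration.integrable_cong) (auto simp: indicator_def)
  ultimately show ?thesis using Torus by (simp add: dual_measure_def)
qed

lemma symb_ge: assumes "1/2 \<le> x" "x \<le> 3/2" shows "1/7 \<le> \<bar>symb x\<bar>"
proof -
  have d: "0 < 1 + x\<^sup>2" by (intro add_pos_nonneg) auto
  have "x\<^sup>2 \<le> 3/2 * x" unfolding power2_eq_square using assms by (intro mult_right_mono) auto
  then have "1/7 * (1 + x\<^sup>2) \<le> x" using assms by (simp only: distrib_left mult_1_right; linarith)
  then have "1/7 \<le> symb x" unfolding symb_def by (subst pos_le_divide_eq[OF d])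
  then show ?thesis by linarith
qed


lemma U2_pt:
  fixes R N \<xi> T :: real
  assumes wi: "integrable (dual_measure M) (\<lambda>\<eta>. (R * indicator (I_N N) (\<xi> - \<eta>)) * (R * indicator (I_N N) \<eta>) :: real)"
    and wA: "R\<^sup>2/2 \<le> (\<integral>\<eta>. (R * indicator (I_N N) (\<xi> - \<eta>)) * (R * indicator (I_N N) \<eta>) \<partial>dual_measure M)"
    and sx: "1/7 \<le> \<bar>symb \<xi>\<bar>" and T: "0 < T" "T \<le> 1/3"
  shows "R\<^sup>2 * T / 448 \<le> cmod (U2_hat M (phi0_hat R N) T \<xi>)"
proof -
  define w where "w = (\<lambda>\<eta>. (R * indicator (I_N N) (\<xi> - \<eta>)) * (R * indicator (I_N N) \<eta>) :: real)"
  define \<psi> where "\<psi> = (\<lambda>\<eta>. symb (\<xi> - \<eta>) + symb \<eta>)"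
  define \<kappa> where "\<kappa> = conv_const M"
  define A where "A = (\<integral>\<eta>. w \<eta> \<partial>dual_measure M)"
  define cv where "cv = (\<lambda>\<tau>. \<kappa> * (\<integral>\<eta>. exp (\<i> * complex_of_real (\<tau> * \<psi> \<eta>)) * complex_of_real (w \<eta>) \<partial>dual_measure M))"
  have wi': "integrable (dual_measure M) w" using wi unfolding w_def .
  have w0: "0 \<le> w \<eta>" for \<eta> unfolding w_def by (simp add: indicator_def)
  have psi: "\<bar>\<psi> \<eta>\<bar> \<le> 1" for \<eta> unfolding \<psi>_def using symb_le[of "\<xi> - \<eta>"] symb_le[of \<eta>] by linarith
  have psim: "\<psi> \<in> borel_measurable (dual_measure M)" unfolding \<psi>_def by (intro dual_meas) measurable
  have ce1: "cmod (cv \<tau> - cv \<tau>') \<le> cmod \<kappa> * A * \<bar>\<tau> - \<tau>'\<bar>" for \<tau> \<tau>'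
    unfolding cv_def A_def by (rule conv_est(1)[OF wi' w0 psi psim])
  have ce2: "cv 0 = \<kappa> * complex_of_real A"
    unfolding cv_def A_def by (rule conv_est(2)[OF wi' w0 psi psim])
  have ce3: "cmod (cv \<tau>) \<le> cmod \<kappa> * A" for \<tau>
    unfolding cv_def A_def by (rule conv_est(3)[OF wi' w0 psi psim])
  have A2: "R\<^sup>2/2 \<le> A" using wA unfolding A_def w_def .
  have A0: "0 \<le> A" using A2 zero_le_power2[of R] by linarith
  have lip: "(cmod \<kappa> * A)-lipschitz_on UNIV cv"
    by (rule lipschitz_onI) (use ce1 A0 in \<open>auto simp: dist_norm\<close>)
  have cont: "continuous_on UNIV cv" by (rule lipschitz_on_continuous_on[OF lip])
  have b1: "cmod (cv \<tau> - \<kappa> * complex_of_real A) \<le> cmod \<kappa> * A * \<bar>\<tau>\<bar>" for \<tau>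
    using ce1[of \<tau> 0] ce2 by simp
  have c0: "cmod (\<kappa> * complex_of_real A) = cmod \<kappa> * A" using A0 by (simp add: norm_mult)
  have te: "\<bar>symb \<xi>\<bar> * (cmod \<kappa> * A) * T / 2 \<le> cmod (LBINT \<tau>=0..T. exp (\<i> * complex_of_real ((T - \<tau>) * symb \<xi>)) * complex_of_real (symb \<xi>) * cv \<tau>)"
    by (rule tau_est[OF cont b1 ce3 c0 symb_le T])
  have U: "U2_hat M (phi0_hat R N) T \<xi> = - (\<i> / 2) * (LBINT \<tau>=0..T. exp (\<i> * complex_of_real ((T - \<tau>) * symb \<xi>)) * complex_of_real (symb \<xi>) * cv \<tau>)"
    unfolding U2_repr cv_def \<kappa>_def \<psi>_def w_def ..
  have "cmod (U2_hat M (phi0_hat R N) T \<xi>) = cmod (LBINT \<tau>=0..T. exp (\<i> * complex_of_real ((T - \<tau>) * symb \<xi>)) * complex_of_real (symb \<xi>) * cv \<tau>) / 2"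
    unfolding U by (simp add: norm_mult norm_divide)
  moreover have "R\<^sup>2 * T / 448 \<le> \<bar>symb \<xi>\<bar> * (cmod \<kappa> * A) * T / 4"
  proof -
    have "1/7 * (1/8 * (R\<^sup>2/2)) \<le> \<bar>symb \<xi>\<bar> * (cmod \<kappa> * A)"
      using sx conv_const_ge[of M] A2 unfolding \<kappa>_def
      by (intro mult_mono) auto
    then have "1/7 * (1/8 * (R\<^sup>2/2)) * T \<le> \<bar>symb \<xi>\<bar> * (cmod \<kappa> * A) * T"
      using T by (intro mult_right_mono) auto
    then show ?thesis by (simp add: mult.commute)
  qed
  ultimately show ?thesis using te by linarith
qed


lemma I_N_borel[measurable]: "I_N N \<in> sets borel"
  unfolding I_N_def by auto

lemma w_meas: "(\<lambda>\<eta>. (R * indicator (I_N N) (\<xi> - \<eta>)) * (R * indicator (I_N N) \<eta>) :: real) \<in> borel_measurable (dual_measure M)"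
  by (intro dual_meas) measurable

lemma Q1_mem: "\<xi> \<in> {1/2<..3/2} \<Longrightarrow> indicator ((\<lambda>x. real_of_int 1 + x) ` Q1) \<xi> = (1::real)"
proof -
  assume "\<xi> \<in> {1/2<..3/2}"
  then have "\<xi> - 1 \<in> Q1" unfolding Q1_def by auto
  then have "\<xi> \<in> (\<lambda>x. real_of_int 1 + x) ` Q1" by (intro image_eqI[of _ _ "\<xi> - 1"]) auto
  then show ?thesis by simp
qed

lemma part2:
  fixes N R T :: real
  assumes p: "1 \<le> p" and N: "0 \<le> N" and NZ: "N \<in> \<int>" and T: "0 < T" "T \<le> 1/3"
  shows "ennreal (R\<^sup>2 * T / 448) \<le> Lp_norm (dual_measure M) p
     (\<lambda>\<xi>. ennreal (indicator ((\<lambda>x. real_of_int 1 + x) ` Q1) \<xi> * cmod (U2_hat M (phi0_hat R N) T \<xi>)))"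
proof (cases M)
  case Line
  show ?thesis
  proof (rule Lp_lower[OF p, of "{1/2<..3/2}"])
    show "{1/2<..3/2} \<in> sets (dual_measure M)" using Line by (simp add: dual_measure_def)
    show "1 \<le> emeasure (dual_measure M) {1/2<..3/2}" using Line by (simp add: dual_measure_def)
    fix \<xi> :: real assume x: "\<xi> \<in> {1/2<..3/2}"
    have m: "emeasure lborel {N+1/2..N+1} = ennreal (1/2)" by (simp only: emeasure_lborel_Icc_eq) simp
    have E: "{N+1/2..N+1} \<in> sets (dual_measure M)" "emeasure (dual_measure M) {N+1/2..N+1} < \<infinity>"
      "1/2 \<le> measure (dual_measure M) {N+1/2..N+1}"
    proof -
      show "{N+1/2..N+1} \<in> sets (dual_measure M)" using Line by (simp add: dual_measure_def)
      show "emeasure (dual_measure M) {N+1/2..N+1} < \<infinity>" using Line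
        by (simp only: dual_measure_def manifold.case m ennreal_less_top infinity_ennreal_def)
      show "1/2 \<le> measure (dual_measure M) {N+1/2..N+1}" using Line by (simp add: dual_measure_def)
    qed
    have Ein: "\<eta> \<in> I_N N \<and> \<xi> - \<eta> \<in> I_N N" if "\<eta> \<in> {N+1/2..N+1}" for \<eta>
      using that x unfolding I_N_def by auto
    note wl = w_lower[OF N E Ein int_indicator_Icc w_meas]
    have "R\<^sup>2 * T / 448 \<le> cmod (U2_hat M (phi0_hat R N) T \<xi>)"
      by (rule U2_pt[OF wl symb_ge T]) (use x in auto)
    then show "ennreal (R\<^sup>2 * T / 448) \<le> ennreal (indicator ((\<lambda>x. real_of_int 1 + x) ` Q1) \<xi> * cmod (U2_hat M (phi0_hat R N) T \<xi>))"
      using Q1_mem[OF x] by (simp add: ennreal_leI)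
  qed
next
  case Torus
  show ?thesis
  proof (rule Lp_lower[OF p, of "{1}"])
    show "{1} \<in> sets (dual_measure M)" using Torus by (simp add: dual_measure_def)
    show "1 \<le> emeasure (dual_measure M) {1}" using Torus by (simp add: dual_measure_def)
    fix \<xi> :: real assume x: "\<xi> \<in> {1}"
    have NI: "N + 1 \<in> \<int>" using NZ by simp
    have E: "{N+1} \<in> sets (dual_measure M)" "emeasure (dual_measure M) {N+1} < \<infinity>"
      "1/2 \<le> measure (dual_measure M) {N+1}"
      using Torus NI by (auto simp: dual_measure_def)
    have Ein: "\<eta> \<in> I_N N \<and> \<xi> - \<eta> \<in> I_N N" if "\<eta> \<in> {N+1}" for \<eta>
      using that x unfolding I_N_def by auto
    note wl = w_lower[OF N E Ein int_indicator_Icc w_meas]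
    have "R\<^sup>2 * T / 448 \<le> cmod (U2_hat M (phi0_hat R N) T \<xi>)"
      by (rule U2_pt[OF wl symb_ge T]) (use x in auto)
    then show "ennreal (R\<^sup>2 * T / 448) \<le> ennreal (indicator ((\<lambda>x. real_of_int 1 + x) ` Q1) \<xi> * cmod (U2_hat M (phi0_hat R N) T \<xi>))"
      using Q1_mem[of \<xi>] x by (simp add: ennreal_leI)
  qed
qed


theorem lemma4p3:
  fixes M :: manifold and p q :: ennreal and s :: real
  assumes "1 \<le> p" and "1 \<le> q"
  shows "\<exists>T0>0. \<exists>N0::nat. N0 \<ge> 2 \<and> (\<exists>c>0. \<forall>N::nat. \<forall>R::real. \<forall>T::real.
           N \<ge> N0 \<longrightarrow> R > 0 \<longrightarrow> 0 < T \<longrightarrow> T \<le> T0 \<longrightarrow>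
             wnorm M p q s (U2_hat M (phi0_hat R (real N)) T)
               \<ge> wpiece M p s (U2_hat M (phi0_hat R (real N)) T) 1
           \<and> wpiece M p s (U2_hat M (phi0_hat R (real N)) T) 1 \<ge> ennreal (c * R\<^sup>2 * T))"
proof -
  define c where "c = jbr 1 powr s / 448"
  have jp: "0 < jbr 1 powr s" unfolding jbr_def by simp
  then have c0: "0 < c" unfolding c_def by simp
  have main: "wnorm M p q s (U2_hat M (phi0_hat R (real N)) T) \<ge> wpiece M p s (U2_hat M (phi0_hat R (real N)) T) 1
           \<and> wpiece M p s (U2_hat M (phi0_hat R (real N)) T) 1 \<ge> ennreal (c * R\<^sup>2 * T)"
    if T: "0 < T" "T \<le> 1/3" for N :: nat and R T :: real
  proof
    show "wnorm M p q s (U2_hat M (phi0_hat R (real N)) T) \<ge> wpiece M p s (U2_hat M (phi0_hat R (real N)) T) 1"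
      unfolding wnorm_def by (rule Lp_lower[OF assms(2), of "{1}"]) auto
    have L: "ennreal (R\<^sup>2 * T / 448) \<le> Lp_norm (dual_measure M) p
     (\<lambda>\<xi>. ennreal (indicator ((\<lambda>x. real_of_int 1 + x) ` Q1) \<xi> * cmod (U2_hat M (phi0_hat R (real N)) T \<xi>)))"
      by (rule part2[OF assms(1) _ _ T]) auto
    have "ennreal (c * R\<^sup>2 * T) = ennreal (R\<^sup>2 * T / 448) * ennreal (jbr 1 powr s)"
      using jp T by (simp add: c_def ennreal_mult[symmetric])
    also have "\<dots> \<le> wpiece M p s (U2_hat M (phi0_hat R (real N)) T) 1"
      unfolding wpiece_def by (rule mult_right_mono[OF L]) simp
    finally show "wpiece M p s (U2_hat M (phi0_hat R (real N)) T) 1 \<ge> ennreal (c * R\<^sup>2 * T)" .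
  qed
  show ?thesis
    by (rule exI[of _ "1/3"], simp, rule exI[of _ "2::nat"], simp, rule exI[of _ c], use c0 main in auto)
qed

end
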